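(* Let $k$ be a positive integer and $n\ge3$. Then $O_{R,k}(C_n)=\mathcal{N}$ if $n=3$ (for all $k\ge1$); $O_{R,k}(C_n)=\mathcal{M}$ if $n\ge4$ is even (for all $k\ge1$); and $O_{R,k}(C_n)=\mathcal{M}$ if $n\ge5$ is odd and $k\ge2$.
   Context: $C_n$ is the cycle on $n$ vertices. $d$ is the shortest-path distance and $d_k(x,y)=\min\{d(x,y),k+1\}$. A set $S$ is a distance-$k$ resolving set if for all distinct $x,y$ some $z\in S$ has $d_k(x,z)\ne d_k(y,z)$. In the Maker-Breaker distance-$k$ resolving game, Maker and Breaker alternately select a not-yet-chosen vertex; Maker wins if his selected vertices form a distance-$k$ resolving set, Breaker wins otherwise. $O_{R,k}(G)=\mathcal{M}$ if Maker has a winning strategy whether he moves first or second, $\mathcal{B}$ if Breaker has a winning strategy whether she moves first or second, and $\mathcal{N}$ if the first player has a winning strategy. *)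

theory Defs
  imports Main
begin

text \<open>A graph is given by a vertex set V and an edge relation E (set of ordered pairs,
  symmetric for undirected graphs).\<close>

definition graph_dist :: "('a \<times> 'a) set \<Rightarrow> 'a \<Rightarrow> 'a \<Rightarrow> nat" where
  "graph_dist E x y = (LEAST d. (x, y) \<in> E ^^ d)"

definition trunc_dist :: "nat \<Rightarrow> ('a \<times> 'a) set \<Rightarrow> 'a \<Rightarrow> 'a \<Rightarrow> nat" where
  "trunc_dist k E x y = min (graph_dist E x y) (k + 1)"

definition cycle_V :: "nat \<Rightarrow> nat set" where
  "cycle_V n = {0..<n}"

definition cycle_E :: "nat \<Rightarrow> (nat \<times> nat) set" where
  "cycle_E n = {(i, j). i < n \<and> j < n \<and> (j = (i + 1) mod n \<or> i = (j + 1) mod n)}"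

definition dist_k_resolving :: "nat \<Rightarrow> 'a set \<Rightarrow> ('a \<times> 'a) set \<Rightarrow> 'a set \<Rightarrow> bool" where
  "dist_k_resolving k V E S \<longleftrightarrow>
     (\<forall>x\<in>V. \<forall>y\<in>V. x \<noteq> y \<longrightarrow> (\<exists>z\<in>S. trunc_dist k E x z \<noteq> trunc_dist k E y z))"

text \<open>maker_win r maker_to_move V W M B: Maker can force a win from the position where
  Maker holds M, Breaker holds B, with at most r further moves remaining to be counted.
  Called with r = card V, the fuel never runs out before the board is exhausted.\<close>

fun maker_win :: "nat \<Rightarrow> bool \<Rightarrow> 'a set \<Rightarrow> ('a set \<Rightarrow> bool) \<Rightarrow> 'a set \<Rightarrow> 'a set \<Rightarrow> bool" where
  "maker_win 0 mt V W M B = W M"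
| "maker_win (Suc r) mt V W M B =
     (if V - (M \<union> B) = {} then W M
      else if mt then (\<exists>v\<in>V - (M \<union> B). maker_win r False V W (insert v M) B)
      else (\<forall>v\<in>V - (M \<union> B). maker_win r True V W M (insert v B)))"

definition maker_wins_first :: "'a set \<Rightarrow> ('a set \<Rightarrow> bool) \<Rightarrow> bool" where
  "maker_wins_first V W = maker_win (card V) True V W {} {}"

definition maker_wins_second :: "'a set \<Rightarrow> ('a set \<Rightarrow> bool) \<Rightarrow> bool" where
  "maker_wins_second V W = maker_win (card V) False V W {} {}"

text \<open>The game is finite and has no draws, so Breaker has a winning strategy when
  moving first (resp. second) iff Maker has none when moving second (resp. first).\<close>

definition breaker_wins_first :: "'a set \<Rightarrow> ('a set \<Rightarrow> bool) \<Rightarrow> bool" where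
  "breaker_wins_first V W = (\<not> maker_wins_second V W)"

definition breaker_wins_second :: "'a set \<Rightarrow> ('a set \<Rightarrow> bool) \<Rightarrow> bool" where
  "breaker_wins_second V W = (\<not> maker_wins_first V W)"

datatype outcome = Outcome_M | Outcome_B | Outcome_N | Outcome_P

definition game_outcome :: "'a set \<Rightarrow> ('a set \<Rightarrow> bool) \<Rightarrow> outcome" where
  "game_outcome V W =
     (if maker_wins_first V W \<and> maker_wins_second V W then Outcome_M
      else if breaker_wins_first V W \<and> breaker_wins_second V W then Outcome_B
      else if maker_wins_first V W \<and> breaker_wins_first V W then Outcome_N
      else Outcome_P)"

definition O_Rk :: "nat \<Rightarrow> 'a set \<Rightarrow> ('a \<times> 'a) set \<Rightarrow> outcome" where
  "O_Rk k V E = game_outcome V (dist_k_resolving k V E)"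

end

theory Submission
  imports Defs
begin


definition cd :: "nat \<Rightarrow> nat \<Rightarrow> nat \<Rightarrow> nat" where
  "cd n i j = (if i \<le> j then min (j - i) (n - (j - i)) else min (i - j) (n - (i - j)))"

lemma cycle_E_iff:
  assumes "n \<ge> 3"
  shows "(w, y) \<in> cycle_E n \<longleftrightarrow> w < n \<and> y < n \<and>
     (y = w + 1 \<or> w = y + 1 \<or> (w = n - 1 \<and> y = 0) \<or> (y = n - 1 \<and> w = 0))"
proof -
  have a: "\<And>a. a < n \<Longrightarrow> Suc a mod n = (if Suc a = n then 0 else Suc a)" by auto
  show ?thesis unfolding cycle_E_def using assms by (auto simp: a split: if_splits)
qed
lemma tri: "n\<ge>3 \<Longrightarrow> x < n \<Longrightarrow> w < n \<Longrightarrow> y < n \<Longrightarrow> cd n x w \<le> d \<Longrightarrow> (y = w + 1 \<or> w = y + 1 \<or> (w = n - 1 \<and> y = 0) \<or> (y = n - 1 \<and> w = 0)) \<Longrightarrow> cd n x y \<le> Suc d"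
  unfolding cd_def by (auto split: if_splits)

lemma relpow_sym:
  assumes "\<And>a b. (a, b) \<in> E \<Longrightarrow> (b, a) \<in> E"
  shows "(x, y) \<in> E ^^ d \<Longrightarrow> (y, x) \<in> E ^^ d"
proof (induction d arbitrary: x y)
  case 0 then show ?case by auto
next
  case (Suc d)
  from Suc.prems obtain w where "(x, w) \<in> E ^^ d" "(w, y) \<in> E" by (auto elim: relpow_Suc_E)
  then have "(y, w) \<in> E" "(w, x) \<in> E ^^ d" using Suc.IH assms by auto
  then show ?case by (rule relpow_Suc_I2)
qed

lemma fwd_walk:
  assumes "n \<ge> 3" "x < n"
  shows "(x, (x + d) mod n) \<in> cycle_E n ^^ d"
proof (induction d)
  case 0 then show ?case using assms by auto
next
  case (Suc d)
  have i: "(x + d) mod n < n" "(x + Suc d) mod n < n" using assms by simp_all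
  have e: "(x + Suc d) mod n = ((x + d) mod n + 1) mod n" by (simp add: mod_Suc_eq)
  have "((x + d) mod n, (x + Suc d) mod n) \<in> cycle_E n"
    unfolding cycle_E_def using i e by blast
  with Suc show ?case by (rule relpow_Suc_I)
qed

lemma lower:
  assumes "n \<ge> 3" "x < n"
  shows "(x, y) \<in> cycle_E n ^^ d \<Longrightarrow> cd n x y \<le> d"
proof (induction d arbitrary: y)
  case 0 then show ?case by (auto simp: cd_def)
next
  case (Suc d)
  from Suc.prems obtain w where w: "(x, w) \<in> cycle_E n ^^ d" "(w, y) \<in> cycle_E n" by (auto elim: relpow_Suc_E)
  have "cd n x w \<le> d" using Suc.IH w by auto
  moreover have "w < n" "y < n" "y = w + 1 \<or> w = y + 1 \<or> (w = n - 1 \<and> y = 0) \<or> (y = n - 1 \<and> w = 0)"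
    using w(2) cycle_E_iff[OF assms(1)] by auto
  ultimately show ?case using assms tri by blast
qed

lemma graph_dist_cycle:
  assumes "n \<ge> 3" "x < n" "y < n"
  shows "graph_dist (cycle_E n) x y = cd n x y"
  unfolding graph_dist_def
proof (rule Least_equality)
  show "(x, y) \<in> cycle_E n ^^ cd n x y"
  proof -
    have sym: "\<And>a b. (a, b) \<in> cycle_E n \<Longrightarrow> (b, a) \<in> cycle_E n" unfolding cycle_E_def by auto
    have gen: "(a, b) \<in> cycle_E n ^^ (b - a)" "(b, a) \<in> cycle_E n ^^ (n - (b - a))"
      if "a \<le> b" "b < n" for a b
    proof -
      have "(a, (a + (b - a)) mod n) \<in> cycle_E n ^^ (b - a)" using fwd_walk[OF assms(1), of a "b - a"] that by simp
      then show "(a, b) \<in> cycle_E n ^^ (b - a)" using that by auto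
      have "(b, (b + (n - (b - a))) mod n) \<in> cycle_E n ^^ (n - (b - a))" using fwd_walk[OF assms(1), of b "n - (b - a)"] that by simp
      moreover have "b + (n - (b - a)) = a + n" using that by auto
      then have "(b + (n - (b - a))) mod n = a" using that by simp
      ultimately show "(b, a) \<in> cycle_E n ^^ (n - (b - a))" by simp
    qed
    have symp: "\<And>a b m. (a, b) \<in> cycle_E n ^^ m \<Longrightarrow> (b, a) \<in> cycle_E n ^^ m"
      using relpow_sym[OF sym] by blast
    show ?thesis
    proof (cases "x \<le> y")
      case True
      note g = gen[OF True assms(3)]
      show ?thesis
      proof (cases "y - x \<le> n - (y - x)")
        case True
        then have "cd n x y = y - x" using \<open>x \<le> y\<close> by (simp add: cd_def)
        then show ?thesis using g by simp
      next
        case False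
        then have "cd n x y = n - (y - x)" using \<open>x \<le> y\<close> by (simp add: cd_def)
        then show ?thesis using g symp by simp
      qed
    next
      case False
      then have yx: "y \<le> x" by simp
      note g = gen[OF yx assms(2)]
      show ?thesis
      proof (cases "x - y \<le> n - (x - y)")
        case True
        then have "cd n x y = x - y" using False by (simp add: cd_def)
        then show ?thesis using g symp by simp
      next
        case c2: False
        then have "cd n x y = n - (x - y)" using False by (simp add: cd_def)
        then show ?thesis using g by simp
      qed
    qed
  qed
next
  fix d assume "(x, y) \<in> cycle_E n ^^ d"
  then show "cd n x y \<le> d" using lower assms by auto
qed



definition okp :: "('a \<Rightarrow> 'a) \<Rightarrow> 'a set \<Rightarrow> 'a set \<Rightarrow> 'a \<Rightarrow> bool" where
  "okp p M B x \<longleftrightarrow> x \<in> M \<or> p x \<in> M \<or> (x \<notin> B \<and> p x \<notin> B)"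

definition INV :: "('a \<Rightarrow> 'a) \<Rightarrow> 'a set \<Rightarrow> bool \<Rightarrow> 'a set \<Rightarrow> 'a set \<Rightarrow> bool" where
  "INV p V mt M B \<longleftrightarrow> (if mt then
     (\<forall>x\<in>V. p x \<noteq> x \<longrightarrow> okp p M B x) \<or>
     (\<exists>c\<in>V - (M \<union> B). \<forall>x\<in>V. p x \<noteq> x \<longrightarrow> okp p M B x \<or> x = c \<or> p x = c)
    else (\<forall>x\<in>V. p x \<noteq> x \<longrightarrow> okp p M B x))"

lemma pairing_main:
  assumes fin: "finite V" and pV: "\<forall>x\<in>V. p x \<in> V" and pinv: "\<forall>x\<in>V. p (p x) = x"
    and win: "\<And>S. (\<forall>x\<in>V. p x \<noteq> x \<longrightarrow> x \<in> S \<or> p x \<in> S) \<Longrightarrow> W S"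
  shows "card (V - (M \<union> B)) \<le> r \<Longrightarrow> INV p V mt M B \<Longrightarrow> maker_win r mt V W M B"
proof (induction r arbitrary: mt M B)
  have endcase: "W M" if e: "V - (M \<union> B) = {}" and I: "INV p V mt M B" for mt M B
  proof -
    have "\<forall>x\<in>V. p x \<noteq> x \<longrightarrow> okp p M B x" using I e unfolding INV_def by (auto split: if_splits)
    then have "\<forall>x\<in>V. p x \<noteq> x \<longrightarrow> x \<in> M \<or> p x \<in> M" using e unfolding okp_def by blast
    then show ?thesis using win by blast
  qed
  {
    case 0
    then have "V - (M \<union> B) = {}" using fin by simp
    then show ?case using endcase 0 by simp
  next
    case (Suc r)
    show ?case
    proof (cases "V - (M \<union> B) = {}")
      case True then show ?thesis using endcase Suc by simp
    next
      case F: False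
      have cardm: "card (V - (insert v M \<union> B)) \<le> r" "card (V - (M \<union> insert v B)) \<le> r"
        if "v \<in> V - (M \<union> B)" for v
      proof -
        have "V - (insert v M \<union> B) = (V - (M \<union> B)) - {v}" "V - (M \<union> insert v B) = (V - (M \<union> B)) - {v}" by auto
        moreover have "card ((V - (M \<union> B)) - {v}) = card (V - (M \<union> B)) - 1"
          using that fin by simp
        ultimately show "card (V - (insert v M \<union> B)) \<le> r" "card (V - (M \<union> insert v B)) \<le> r"
          using Suc.prems(1) by simp_all
      qed
      show ?thesis
      proof (cases mt)
        case True
        obtain v where v: "v \<in> V - (M \<union> B)" and
          hv: "\<forall>x\<in>V. p x \<noteq> x \<longrightarrow> okp p M B x \<or> x = v \<or> p x = v"
          using Suc.prems(2) True F unfolding INV_def by auto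
        have "INV p V False (insert v M) B"
          unfolding INV_def okp_def using hv unfolding okp_def by auto
        then have "maker_win r False V W (insert v M) B" using Suc.IH cardm(1)[OF v] by blast
        then show ?thesis using True F v by auto
      next
        case False
        have "maker_win r True V W M (insert v B)" if v: "v \<in> V - (M \<union> B)" for v
        proof -
          have old: "\<forall>x\<in>V. p x \<noteq> x \<longrightarrow> okp p M B x" using Suc.prems(2) False unfolding INV_def by simp
          have "INV p V True M (insert v B)"
          proof (cases "\<forall>x\<in>V. p x \<noteq> x \<longrightarrow> okp p M (insert v B) x")
            case True then show ?thesis unfolding INV_def by simp
          next
            case nall: False
            then obtain x where x: "x \<in> V" "p x \<noteq> x" "\<not> okp p M (insert v B) x" by blast
            then have xo: "okp p M B x" using old by blast
            then have xf: "x \<notin> M" "p x \<notin> M" "x \<notin> B" "p x \<notin> B" "x = v \<or> p x = v"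
              using x unfolding okp_def by auto
            have pvf: "p v \<in> V - (M \<union> insert v B)" "p v \<noteq> v"
              using xf x pinv pV by auto
            have "\<forall>y\<in>V. p y \<noteq> y \<longrightarrow> okp p M (insert v B) y \<or> y = p v \<or> p y = p v"
            proof (intro ballI impI)
              fix y assume y: "y \<in> V" "p y \<noteq> y"
              then have "okp p M B y" using old by blast
              then show "okp p M (insert v B) y \<or> y = p v \<or> p y = p v"
                using y pinv v unfolding okp_def by auto
            qed
            then show ?thesis unfolding INV_def using pvf by auto
          qed
          then show ?thesis using Suc.IH cardm(2)[OF v] by blast
        qed
        then show ?thesis using False F by auto
      qed
    qed
  }
qed

lemma pairing_strategy:
  assumes fin: "finite V" and pV: "\<forall>x\<in>V. p x \<in> V" and pinv: "\<forall>x\<in>V. p (p x) = x"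
    and win: "\<And>S. (\<forall>x\<in>V. p x \<noteq> x \<longrightarrow> x \<in> S \<or> p x \<in> S) \<Longrightarrow> W S"
  shows "maker_wins_first V W \<and> maker_wins_second V W"
  unfolding maker_wins_first_def maker_wins_second_def
  using pairing_main[OF assms] by (auto simp: INV_def okp_def)


definition rs :: "nat \<Rightarrow> nat \<Rightarrow> nat \<Rightarrow> nat \<Rightarrow> nat \<Rightarrow> bool" where
  "rs n k x y z \<longleftrightarrow> min (cd n x z) (k+1) \<noteq> min (cd n y z) (k+1)"
lemma A1: "x < 2*m \<Longrightarrow> m \<ge> 2 \<Longrightarrow> k \<ge> 2 \<Longrightarrow> rs (2*m+1) k x (2*m) 0 \<or> x = 1"
  unfolding rs_def cd_def by (auto simp: min_def split: if_splits)
lemma A2: "x < 2*m \<Longrightarrow> m \<ge> 2 \<Longrightarrow> k \<ge> 2 \<Longrightarrow> rs (2*m+1) k x (2*m) 1 \<or> x = 1 \<or> x = 3"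
  unfolding rs_def cd_def by (auto simp: min_def split: if_splits) presburger+
lemma A3: "m \<ge> 2 \<Longrightarrow> k \<ge> 2 \<Longrightarrow> rs (2*m+1) k 1 (2*m) (2*m-1) \<and> rs (2*m+1) k 1 (2*m) (2*m-2)"
  unfolding rs_def cd_def by (auto simp: min_def split: if_splits) presburger+
lemma A4: "m \<ge> 2 \<Longrightarrow> k \<ge> 2 \<Longrightarrow> rs (2*m+1) k 3 (2*m) 2"
  unfolding rs_def cd_def by (auto simp: min_def split: if_splits)

definition po :: "nat \<Rightarrow> nat \<Rightarrow> nat" where
  "po n x = (if x = n - 1 then x else if even x then x + 1 else x - 1)"

lemma cd1: "n \<ge> 3 \<Longrightarrow> a < n \<Longrightarrow> b < n \<Longrightarrow> cd n a b = 1 \<longleftrightarrow> (b = a+1 \<or> a = b+1 \<or> (a=0 \<and> b = n-1) \<or> (b=0 \<and> a=n-1))"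
  unfolding cd_def by (auto simp: min_def split: if_splits)

lemma core_odd:
  assumes "x < n - 1" "y < n - 1" "x \<noteq> y" "odd n" "n \<ge> 5" "k \<ge> 1"
  shows "rs n k x y (po n x) \<or> rs n k x y (po n y)"
proof -
  have px: "(even x \<and> po n x = x + 1) \<or> (odd x \<and> x \<ge> 1 \<and> po n x = x - 1)"
    "(even y \<and> po n y = y + 1) \<or> (odd y \<and> y \<ge> 1 \<and> po n y = y - 1)"
    using assms unfolding po_def by (auto dest: odd_pos)
  have lt: "po n x < n" "po n y < n" using px assms by auto
  have h: "cd n x (po n x) = 1" "cd n y (po n y) = 1" using px assms unfolding cd_def by auto
  show ?thesis
  proof (rule ccontr)
    assume "\<not> ?thesis"
    then have "cd n y (po n x) = 1" "cd n x (po n y) = 1" using h assms by (auto simp: rs_def min_def split: if_splits)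
    then have c: "(po n x = y+1 \<or> y = po n x+1 \<or> (y=0 \<and> po n x = n-1) \<or> (po n x=0 \<and> y=n-1))"
       "(po n y = x+1 \<or> x = po n y+1 \<or> (x=0 \<and> po n y = n-1) \<or> (po n y=0 \<and> x=n-1))"
      using cd1[of n] assms lt by auto
    show False
    proof (cases "even x")
      case True
      then have p1: "po n x = x + 1" using px by auto
      have "x + 1 \<noteq> n - 1" using True assms(4) by presburger
      then have y2: "y = x + 2" using c(1) p1 assms(3) by auto
      then have "even y" using True by simp
      then have "po n y = x + 3" using px y2 by auto
      then show False using c(2) assms by auto
    next
      case False
      then have p1: "po n x = x - 1" "x \<ge> 1" using px by auto
      then have y2: "y = x - 2" "x \<ge> 2" using c(1) assms(1,2,3) by auto
      then have "odd y" using False by (simp add: odd_pos even_diff_nat)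
      then have "po n y = x - 3" "y \<ge> 1" using px y2 by auto
      then show False using c(2) assms False y2 by auto
    qed
  qed
qed


lemma resolving_suff:
  assumes "n \<ge> 3" "\<And>x y. x < n \<Longrightarrow> y < n \<Longrightarrow> x \<noteq> y \<Longrightarrow> \<exists>z\<in>S. z < n \<and> rs n k x y z"
  shows "dist_k_resolving k (cycle_V n) (cycle_E n) S"
  unfolding dist_k_resolving_def
proof (intro ballI impI)
  fix x y assume xy: "x \<in> cycle_V n" "y \<in> cycle_V n" "x \<noteq> y"
  then obtain z where z: "z \<in> S" "z < n" "rs n k x y z" using assms(2)[of x y] by (auto simp: cycle_V_def)
  then have "trunc_dist k (cycle_E n) x z \<noteq> trunc_dist k (cycle_E n) y z"
    using xy assms(1) unfolding trunc_dist_def rs_def cycle_V_def by (simp add: graph_dist_cycle)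
  then show "\<exists>z\<in>S. trunc_dist k (cycle_E n) x z \<noteq> trunc_dist k (cycle_E n) y z" using z by blast
qed

lemma rs_self: "x < n \<Longrightarrow> y < n \<Longrightarrow> x \<noteq> y \<Longrightarrow> rs n k x y x"
  unfolding rs_def cd_def by (auto simp: min_def)

lemma rs_sym: "rs n k x y z \<longleftrightarrow> rs n k y x z" unfolding rs_def by auto

lemma ev_lt: assumes "even (a::nat)" "even (n::nat)" "a < n" shows "a + 1 < n"
proof -
  have "a + 1 \<noteq> n" using assms by auto
  then show ?thesis using assms by linarith
qed

definition pe :: "nat \<Rightarrow> nat" where "pe x = (if even x then x + 1 else x - 1)"

lemma core_even:
  assumes "x < n" "y < n" "x \<noteq> y" "even n" "n \<ge> 6" "k \<ge> 1"
  shows "rs n k x y (pe x) \<or> rs n k x y (pe y)"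
proof -
  have px: "(even x \<and> pe x = x + 1) \<or> (odd x \<and> x \<ge> 1 \<and> pe x = x - 1)"
    "(even y \<and> pe y = y + 1) \<or> (odd y \<and> y \<ge> 1 \<and> pe y = y - 1)"
    using assms unfolding pe_def by (auto dest: odd_pos)
  have lx: "even x \<Longrightarrow> x + 1 < n" "even y \<Longrightarrow> y + 1 < n" using assms ev_lt by blast+
  have lt: "pe x < n" "pe y < n" using px assms lx by auto
  have h: "cd n x (pe x) = 1" "cd n y (pe y) = 1" using px assms unfolding cd_def by auto
  show ?thesis
  proof (rule ccontr)
    assume "\<not> ?thesis"
    then have "cd n y (pe x) = 1" "cd n x (pe y) = 1" using h assms by (auto simp: rs_def min_def split: if_splits)
    then have c: "(pe x = y+1 \<or> y = pe x+1 \<or> (y=0 \<and> pe x = n-1) \<or> (pe x=0 \<and> y=n-1))"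
       "(pe y = x+1 \<or> x = pe y+1 \<or> (x=0 \<and> pe y = n-1) \<or> (pe y=0 \<and> x=n-1))"
      using cd1[of n] assms lt by auto
    show False
    proof (cases "even x")
      case True
      then have p1: "pe x = x + 1" using px by auto
      then have y2: "y = x + 2 \<or> (x + 1 = n - 1 \<and> y = 0)" using c(1) p1 assms(3) by auto
      then show False
      proof
        assume y3: "y = x + 2"
        then have "even y" using True by simp
        then have "pe y = x + 3" using px y3 by auto
        then show False using c(2) assms y3 by auto
      next
        assume y3: "x + 1 = n - 1 \<and> y = 0"
        then have "pe y = 1" unfolding pe_def by simp
        then show False using c(2) assms y3 by auto
      qed
    next
      case False
      then have p1: "pe x = x - 1" "x \<ge> 1" using px by auto
      then have y2: "(y = x - 2 \<and> x \<ge> 2) \<or> (x = 1 \<and> y = n - 1)" using c(1) p1 assms(1,2,3) by auto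
      then show False
      proof
        assume y3: "y = x - 2 \<and> x \<ge> 2"
        then have "odd y" using False by (simp add: odd_pos even_diff_nat)
        then have "pe y = x - 3" "y \<ge> 1" using px y3 by auto
        then show False using c(2) assms False y3 by auto
      next
        assume y3: "x = 1 \<and> y = n - 1"
        then have "odd y" using assms(4,5) by simp
        then have "pe y = n - 2" using y3 unfolding pe_def by simp
        then show False using c(2) assms y3 by auto
      qed
    qed
  qed
qed

lemma resolving_even:
  assumes "even n" "n \<ge> 6" "k \<ge> 1" "\<forall>x\<in>cycle_V n. pe x \<noteq> x \<longrightarrow> x \<in> S \<or> pe x \<in> S"
  shows "dist_k_resolving k (cycle_V n) (cycle_E n) S"
proof (rule resolving_suff)
  show "n \<ge> 3" using assms by simp
  fix x y assume xy: "x < n" "y < n" "x \<noteq> y"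
  have ne: "pe a \<noteq> a" for a unfolding pe_def by (auto dest: odd_pos)
  have lt: "pe a < n" if "a < n" for a
  proof (cases "even a")
    case True then show ?thesis using that assms ev_lt[of a n] unfolding pe_def by simp
  next
    case False then show ?thesis using that unfolding pe_def by simp
  qed
  show "\<exists>z\<in>S. z < n \<and> rs n k x y z"
  proof (cases "x \<in> S")
    case True then show ?thesis using rs_self xy by blast
  next
    case xS: False
    show ?thesis
    proof (cases "y \<in> S")
      case True then show ?thesis using rs_self[of y n x k] rs_sym xy by blast
    next
      case False
      then have "pe x \<in> S" "pe y \<in> S" using xS assms(4) xy ne by (auto simp: cycle_V_def)
      then show ?thesis using core_even[OF xy assms(1,2,3)] lt xy by blast
    qed
  qed
qed

definition p4 :: "nat \<Rightarrow> nat" where "p4 x = (if x < 2 then x + 2 else x - 2)"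

lemma resolving_4:
  assumes "k \<ge> 1" "\<forall>x\<in>cycle_V 4. p4 x \<noteq> x \<longrightarrow> x \<in> S \<or> p4 x \<in> S"
  shows "dist_k_resolving k (cycle_V 4) (cycle_E 4) S"
proof (rule resolving_suff)
  show "(4::nat) \<ge> 3" by simp
  fix x y :: nat assume xy: "x < 4" "y < 4" "x \<noteq> y"
  have h: "0 \<in> S \<or> 2 \<in> S" "1 \<in> S \<or> 3 \<in> S"
  proof -
    have a: "(0::nat) \<in> cycle_V 4" "(1::nat) \<in> cycle_V 4" "p4 0 = 2" "p4 1 = 3" by (simp_all add: p4_def cycle_V_def)
    show "0 \<in> S \<or> 2 \<in> S" "1 \<in> S \<or> 3 \<in> S" using assms(2) a by force+
  qed
  have x4: "x = 0 \<or> x = 1 \<or> x = 2 \<or> x = 3" "y = 0 \<or> y = 1 \<or> y = 2 \<or> y = 3" using xy by auto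
  have "rs 4 k x y a \<or> rs 4 k x y b" if ab: "a = 0 \<or> a = 2" "b = 1 \<or> b = 3" for a b
    using x4 ab xy(3) assms(1) by (elim disjE; simp add: rs_def cd_def min_def)
  then have "\<forall>a\<in>{0,2}. \<forall>b\<in>{1,3}. rs 4 k x y a \<or> rs 4 k x y b" by blast
  then show "\<exists>z\<in>S. z < 4 \<and> rs 4 k x y z" using h by force
qed

lemma resolving_odd:
  assumes "odd n" "n \<ge> 5" "k \<ge> 2" "\<forall>x\<in>cycle_V n. po n x \<noteq> x \<longrightarrow> x \<in> S \<or> po n x \<in> S"
  shows "dist_k_resolving k (cycle_V n) (cycle_E n) S"
proof (rule resolving_suff)
  show "n \<ge> 3" using assms by simp
  obtain m where m: "n = 2 * m + 1" "m \<ge> 2" using assms(1,2) by (auto elim: oddE)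
  have ne: "a < n - 1 \<Longrightarrow> po n a \<noteq> a" for a unfolding po_def by (auto dest: odd_pos)
  have lt: "po n a < n" if "a < n" for a using that m unfolding po_def
    by auto
  have hit: "a < n - 1 \<Longrightarrow> a \<in> S \<or> po n a \<in> S" for a using assms(4) ne by (auto simp: cycle_V_def)
  have poe: "po n a = a + 1" if "even a" "a < n - 1" for a using that unfolding po_def by auto
  have poo: "po n a = a - 1" if "odd a" "a < n - 1" for a using that unfolding po_def by auto
  have L: "\<exists>z\<in>S. z < n \<and> rs n k x (n - 1) z" if x: "x < n - 1" "x \<notin> S" for x
  proof -
    have S01: "0 \<in> S \<or> 1 \<in> S" using hit[of 0] poe[of 0] m by auto
    have S23: "2 \<in> S \<or> 3 \<in> S" using hit[of 2] poe[of 2] m by auto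
    have e3: "even (n - 3)" "n - 3 < n - 1" using m by auto
    have "po n (n - 3) = n - 2" using poe[OF e3] m by simp
    then have Sn: "n - 3 \<in> S \<or> n - 2 \<in> S" using hit[OF e3(2)] by simp
    have xm: "x < 2 * m" using x m by simp
    have nn: "n - 1 = 2 * m" "n - 2 = 2 * m - 1" "n - 3 = 2 * m - 2" using m by auto
    show ?thesis
    proof (cases "0 \<in> S")
      case True
      show ?thesis
      proof (cases "x = 1")
        case False
        then have "rs n k x (n-1) 0" using A1[OF xm m(2) assms(3)] m nn by simp
        then show ?thesis using True m by auto
      next
        case x1: True
        have "rs n k x (n-1) (n-2) \<and> rs n k x (n-1) (n-3)" using A3[OF m(2) assms(3)] x1 m nn by simp
        moreover have "n - 2 < n" "n - 3 < n" using m by auto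
        ultimately show ?thesis using Sn by blast
      qed
    next
      case False
      then have S1: "1 \<in> S" using S01 by simp
      then have x1: "x \<noteq> 1" using x by auto
      show ?thesis
      proof (cases "x = 3")
        case False
        then have "rs n k x (n-1) 1" using A2[OF xm m(2) assms(3)] x1 m nn by simp
        moreover have "1 < n" using m by auto
        ultimately show ?thesis using S1 by blast
      next
        case x3: True
        then have "2 \<in> S" using S23 x by auto
        moreover have "rs n k x (n-1) 2" using A4[OF m(2) assms(3)] x3 m nn by simp
        moreover have "2 < n" using m by auto
        ultimately show ?thesis by blast
      qed
    qed
  qed
  fix x y assume xy: "x < n" "y < n" "x \<noteq> y"
  show "\<exists>z\<in>S. z < n \<and> rs n k x y z"
  proof (cases "x \<in> S")
    case True then show ?thesis using rs_self xy by blast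
  next
    case xS: False
    show ?thesis
    proof (cases "y \<in> S")
      case True then show ?thesis using rs_self[of y n x k] rs_sym xy by blast
    next
      case yS: False
      show ?thesis
      proof (cases "x = n - 1")
        case True
        then have "y < n - 1" using xy by auto
        then show ?thesis using L[of y] yS True rs_sym by blast
      next
        case xn: False
        show ?thesis
        proof (cases "y = n - 1")
          case True
          then show ?thesis using L[of x] xS xn xy by auto
        next
          case False
          then have xy': "x < n - 1" "y < n - 1" using xn xy by auto
          then have "po n x \<in> S" "po n y \<in> S" using hit xS yS by auto
          moreover have "rs n k x y (po n x) \<or> rs n k x y (po n y)"
            using core_odd[OF xy' xy(3) assms(1,2), of k] assms(3) by simp
          ultimately show ?thesis using lt xy by blast
        qed
      qed
    qed
  qed
qed



lemma game3:
  assumes w: "\<And>S. (0::nat) \<in> S \<Longrightarrow> (1 \<in> S \<or> 2 \<in> S) \<Longrightarrow> W S"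
    and nw: "\<not> W {1}" "\<not> W {2}"
  shows "maker_win 3 True {0,1,2::nat} W {} {}" "\<not> maker_win 3 False {0,1,2::nat} W {} {}"
proof -
  have e: "(3::nat) = Suc (Suc (Suc 0))" by simp
  show "maker_win 3 True {0,1,2::nat} W {} {}" unfolding e
    using w by (simp add: insert_Diff_if)
  show "\<not> maker_win 3 False {0,1,2::nat} W {} {}" unfolding e
    using nw by (simp add: insert_Diff_if)
qed



lemma W3:
  assumes "k \<ge> 1"
  shows "\<And>S. (0::nat) \<in> S \<Longrightarrow> (1 \<in> S \<or> 2 \<in> S) \<Longrightarrow> dist_k_resolving k (cycle_V 3) (cycle_E 3) S"
    "\<not> dist_k_resolving k (cycle_V 3) (cycle_E 3) {1}" "\<not> dist_k_resolving k (cycle_V 3) (cycle_E 3) {2}"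
proof -
  fix S :: "nat set" assume S: "0 \<in> S" "1 \<in> S \<or> 2 \<in> S"
  show "dist_k_resolving k (cycle_V 3) (cycle_E 3) S"
  proof (rule resolving_suff)
    show "(3::nat) \<ge> 3" by simp
    fix x y :: nat assume xy: "x < 3" "y < 3" "x \<noteq> y"
    have x3: "x = 0 \<or> x = 1 \<or> x = 2" "y = 0 \<or> y = 1 \<or> y = 2" using xy by auto
    have "rs 3 k x y 0 \<or> rs 3 k x y b" if b: "b = 1 \<or> b = 2" for b
      using x3 b xy(3) assms(1) by (elim disjE; simp add: rs_def cd_def min_def)
    then show "\<exists>z\<in>S. z < 3 \<and> rs 3 k x y z" using S by force
  qed
next
  have t: "trunc_dist k (cycle_E 3) a b = min (cd 3 a b) (k + 1)" if "a < 3" "b < 3" for a b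
    unfolding trunc_dist_def using graph_dist_cycle[of 3 a b] that by simp
  have V: "(0::nat) \<in> cycle_V 3" "(1::nat) \<in> cycle_V 3" "(2::nat) \<in> cycle_V 3" by (auto simp: cycle_V_def)
  have "trunc_dist k (cycle_E 3) 0 1 = trunc_dist k (cycle_E 3) 2 1"
    using t[of 0 1] t[of 2 1] by (simp add: cd_def)
  then show "\<not> dist_k_resolving k (cycle_V 3) (cycle_E 3) {1}"
    unfolding dist_k_resolving_def using V by force
  have "trunc_dist k (cycle_E 3) 0 2 = trunc_dist k (cycle_E 3) 1 2"
    using t[of 0 2] t[of 1 2] by (simp add: cd_def)
  then show "\<not> dist_k_resolving k (cycle_V 3) (cycle_E 3) {2}"
    unfolding dist_k_resolving_def using V by force
qed

theorem proposition3p5: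
  fixes k n :: nat
  assumes "k \<ge> 1" and "n \<ge> 3"
  shows "(n = 3 \<longrightarrow> O_Rk k (cycle_V n) (cycle_E n) = Outcome_N)
       \<and> (even n \<and> n \<ge> 4 \<longrightarrow> O_Rk k (cycle_V n) (cycle_E n) = Outcome_M)
       \<and> (odd n \<and> n \<ge> 5 \<and> k \<ge> 2 \<longrightarrow> O_Rk k (cycle_V n) (cycle_E n) = Outcome_M)"
proof (intro conjI impI)
  have finV: "finite (cycle_V n)" by (simp add: cycle_V_def)
  have M: "O_Rk k (cycle_V n) (cycle_E n) = Outcome_M"
    if "maker_wins_first (cycle_V n) (dist_k_resolving k (cycle_V n) (cycle_E n)) \<and>
        maker_wins_second (cycle_V n) (dist_k_resolving k (cycle_V n) (cycle_E n))"
    using that unfolding O_Rk_def game_outcome_def by simp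
  {
    assume n3: "n = 3"
    have V3: "cycle_V 3 = {0,1,2::nat}" by (auto simp: cycle_V_def)
    have c: "card (cycle_V 3) = 3" by (simp add: cycle_V_def)
    have g: "maker_win 3 True {0,1,2::nat} (dist_k_resolving k (cycle_V 3) (cycle_E 3)) {} {}"
      "\<not> maker_win 3 False {0,1,2::nat} (dist_k_resolving k (cycle_V 3) (cycle_E 3)) {} {}"
      using game3[of "dist_k_resolving k (cycle_V 3) (cycle_E 3)"] W3[OF assms(1)] by blast+
    have "maker_wins_first (cycle_V 3) (dist_k_resolving k (cycle_V 3) (cycle_E 3))"
      "\<not> maker_wins_second (cycle_V 3) (dist_k_resolving k (cycle_V 3) (cycle_E 3))"
      unfolding maker_wins_first_def maker_wins_second_def c using g V3 by simp_all
    then show "O_Rk k (cycle_V n) (cycle_E n) = Outcome_N"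
      unfolding n3 O_Rk_def game_outcome_def breaker_wins_first_def breaker_wins_second_def by simp
  }
  {
    assume ev: "even n \<and> n \<ge> 4"
    show "O_Rk k (cycle_V n) (cycle_E n) = Outcome_M"
    proof (cases "n = 4")
      case True
      have "maker_wins_first (cycle_V 4) (dist_k_resolving k (cycle_V 4) (cycle_E 4)) \<and>
        maker_wins_second (cycle_V 4) (dist_k_resolving k (cycle_V 4) (cycle_E 4))"
      proof (rule pairing_strategy[where p = p4])
        show "finite (cycle_V 4)" by (simp add: cycle_V_def)
        show "\<forall>x\<in>cycle_V 4. p4 x \<in> cycle_V 4" "\<forall>x\<in>cycle_V 4. p4 (p4 x) = x"
          by (auto simp: cycle_V_def p4_def)
        fix S assume "\<forall>x\<in>cycle_V 4. p4 x \<noteq> x \<longrightarrow> x \<in> S \<or> p4 x \<in> S"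
        then show "dist_k_resolving k (cycle_V 4) (cycle_E 4) S" using resolving_4 assms(1) by blast
      qed
      then show ?thesis using M True by simp
    next
      case False
      then have n6: "n \<ge> 6" using ev by presburger
      show ?thesis
      proof (rule M, rule pairing_strategy[where p = pe])
        show "finite (cycle_V n)" by (simp add: cycle_V_def)
        show "\<forall>x\<in>cycle_V n. pe x \<in> cycle_V n"
        proof
          fix a assume "a \<in> cycle_V n"
          then have a: "a < n" by (simp add: cycle_V_def)
          show "pe a \<in> cycle_V n"
          proof (cases "even a")
            case True then show ?thesis using a ev ev_lt[of a n] unfolding pe_def cycle_V_def by simp
          next
            case False then show ?thesis using a unfolding pe_def cycle_V_def by simp
          qed
        qed
        show "\<forall>x\<in>cycle_V n. pe (pe x) = x" unfolding pe_def by (auto dest: odd_pos)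
        fix S assume "\<forall>x\<in>cycle_V n. pe x \<noteq> x \<longrightarrow> x \<in> S \<or> pe x \<in> S"
        then show "dist_k_resolving k (cycle_V n) (cycle_E n) S" using resolving_even ev n6 assms(1) by blast
      qed
    qed
  }
  {
    assume od: "odd n \<and> n \<ge> 5 \<and> k \<ge> 2"
    show "O_Rk k (cycle_V n) (cycle_E n) = Outcome_M"
    proof (rule M, rule pairing_strategy[where p = "po n"])
      show "finite (cycle_V n)" by (simp add: cycle_V_def)
      show "\<forall>x\<in>cycle_V n. po n x \<in> cycle_V n" "\<forall>x\<in>cycle_V n. po n (po n x) = x"
        using od unfolding po_def cycle_V_def by (auto dest: odd_pos) presburger
      fix S assume "\<forall>x\<in>cycle_V n. po n x \<noteq> x \<longrightarrow> x \<in> S \<or> po n x \<in> S"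
      then show "dist_k_resolving k (cycle_V n) (cycle_E n) S" using resolving_odd od by blast
    qed
  }
qed


end
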